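(* Let $k\ge3$ be odd, $p\in[0,1]$ and $q\in[0,1]$, and consider the mean-field Edge-Majority process on the infinite tree $\mathcal T$ with root $v_0$ started from i.i.d. initial states with $\Pr(x_v^{(0)}=\mathcal R)=q$. Then $$\lim_{t\to\infty}\Pr(x_{v_0}^{(t)}=\mathcal R)=\begin{cases}\varphi^+_{p,k} & \text{if } p<p_k^\star \text{ and } q>\varphi^-_{p,k},\\ 0 & \text{if } p<p_k^\star\text{ and } q<\varphi^-_{p,k},\\ 0 & \text{if } p>p_k^\star.\end{cases}$$
   Context: $\mathcal T$ is the infinite rooted tree with root $v_0$ in which every vertex has exactly $k$ children. Each vertex $v$ has a state $x_v^{(t)}\in\{\mathcal R,\mathcal B\}$ at every round $t\in\mathbb N_0$. At $t=0$ each vertex is $\mathcal R$ with probability $q$ and $\mathcal B$ otherwise, independently. For $t\ge0$, each vertex $v$ looks at its $k$ children: for each child $w$, independently of everything else, $v$ sees $w$ as $\mathcal B$ with probability $p$ and otherwise sees $x_w^{(t)}$; then $x_v^{(t+1)}$ is the state seen by the majority of the $k$ children. $F_{p,k}(x)=\Pr[\mathrm{Bin}(k,(1-p)x)\ge(k+1)/2]$. $p_k^\star\in[1/9,1/2)$ is the (unique) value such that: for $0\le p<p_k^\star$, $F_{p,k}(x)=x$ on $[0,1]$ has exactly three solutions $0<\varphi^-_{p,k}<\varphi^+_{p,k}$; for $p=p_k^\star$ exactly two; for $p>p_k^\star$ only $0$. *)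

theory Defs
  imports "HOL-Probability.Probability"
begin

text \<open>Vertices of the infinite k-ary tree are finite lists of child indices
(entries < k); the root v0 is the empty list, the children of v are v @ [i], i < k.\<close>

text \<open>Inl v        : initial state of vertex v; True means R (probability q).
  Inr (v,i,t)  : in round t, vertex v sees its i-th child as B regardless of
                 its state (True, probability p).\<close>

type_synonym em_index = "nat list + nat list \<times> nat \<times> nat"

definition em_space :: "real \<Rightarrow> real \<Rightarrow> (em_index \<Rightarrow> bool) measure" where
  "em_space p q = (\<Pi>\<^sub>M i\<in>UNIV. (case i of
       Inl _ \<Rightarrow> measure_pmf (bernoulli_pmf q)
     | Inr _ \<Rightarrow> measure_pmf (bernoulli_pmf p)))"

text \<open>State of vertex v at round t (True = R). Round t+1: majority of the k
  seen states; since k is odd, R wins iff at least (k+1)/2 children are seen as R.\<close>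

primrec em_state :: "nat \<Rightarrow> (em_index \<Rightarrow> bool) \<Rightarrow> nat list \<Rightarrow> nat \<Rightarrow> bool" where
  "em_state k \<omega> v 0 = \<omega> (Inl v)"
| "em_state k \<omega> v (Suc t) =
     (k + 1 \<le> 2 * card {i. i < k \<and> \<not> \<omega> (Inr (v, i, t)) \<and> em_state k \<omega> (v @ [i]) t})"

definition prob_root_R :: "nat \<Rightarrow> real \<Rightarrow> real \<Rightarrow> nat \<Rightarrow> real" where
  "prob_root_R k p q t = measure (em_space p q) {\<omega> \<in> space (em_space p q). em_state k \<omega> [] t}"

definition F :: "real \<Rightarrow> nat \<Rightarrow> real \<Rightarrow> real" where
  "F p k x = measure_pmf.prob (binomial_pmf k ((1 - p) * x)) {i. k + 1 \<le> 2 * i}"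

definition fixpoints :: "real \<Rightarrow> nat \<Rightarrow> real set" where
  "fixpoints p k = {x \<in> {0..1}. F p k x = x}"

definition p_star :: "nat \<Rightarrow> real" where
  "p_star k = (THE ps. ps \<in> {1/9..<1/2} \<and>
      (\<forall>p. 0 \<le> p \<and> p < ps \<longrightarrow> card (fixpoints p k) = 3) \<and>
      card (fixpoints ps k) = 2 \<and>
      (\<forall>p. ps < p \<and> p \<le> 1 \<longrightarrow> fixpoints p k = {0}))"

text \<open>For p < p_star k the fixed points are 0 < phi_minus < phi_plus.\<close>

definition phi_minus :: "real \<Rightarrow> nat \<Rightarrow> real" where
  "phi_minus p k = Min (fixpoints p k - {0})"

definition phi_plus :: "real \<Rightarrow> nat \<Rightarrow> real" where
  "phi_plus p k = Max (fixpoints p k)"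

end

theory Submission
  imports Defs
begin

definition Bm :: "nat \<Rightarrow> real \<Rightarrow> real" where
  "Bm m y = (\<Sum>i=m..2*m-1. real ((2*m-1) choose i) * y^i * (1-y)^(2*m-1-i))"

definition Tm :: "nat \<Rightarrow> nat \<Rightarrow> real \<Rightarrow> real" where
  "Tm n j y = real ((n-1) choose j) * y^j * (1-y)^(n-1-j)"

lemma term_deriv:
  assumes "1 \<le> i" "i \<le> n"
  shows "((\<lambda>y. real (n choose i) * y^i * (1-y)^(n-i)) has_real_derivative
           real n * (Tm n (i-1) y - Tm n i y)) (at y)"
proof -
  have d: "((\<lambda>y. real (n choose i) * y^i * (1-y)^(n-i)) has_real_derivative
     real (n choose i) * (real i * y^(i-1) * (1-y)^(n-i) - y^i * (real (n-i) * (1-y)^(n-i-1)))) (at y)"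
    by (auto intro!: derivative_eq_intros simp: algebra_simps)
  have e1: "real (n choose i) * real i = real n * real ((n-1) choose (i-1))"
    using times_binomial_minus1_eq[of i n] assms by (metis of_nat_mult mult.commute not_one_le_zero zero_less_iff_neq_zero)
  have e2: "real (n choose i) * real (n-i) = real n * real ((n-1) choose i)"
    using binomial_absorb_comp[of n i] by (metis of_nat_mult mult.commute)
  have x1: "n - 1 - (i - 1) = n - i" using assms by auto
  have x2: "n - 1 - i = n - i - 1" by auto
  have "real (n choose i) * (real i * y^(i-1) * (1-y)^(n-i) - y^i * (real (n-i) * (1-y)^(n-i-1)))
      = (real (n choose i) * real i) * y^(i-1) * (1-y)^(n-i) - (real (n choose i) * real (n-i)) * y^i * (1-y)^(n-i-1)"
    by (simp add: algebra_simps)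
  also have "\<dots> = real n * (Tm n (i-1) y - Tm n i y)"
    unfolding e1 e2 Tm_def x1 x2 by (simp add: algebra_simps)
  finally show ?thesis using d by simp
qed

lemma telescope_aux:
  fixes f :: "nat \<Rightarrow> real"
  assumes "a \<le> b"
  shows "(\<Sum>i=Suc a..b. (f (i-1) - f i)) = f a - f b"
  using assms
proof (induction b)
  case 0 then show ?case by simp
next
  case (Suc b)
  show ?case
  proof (cases "a = Suc b")
    case True then show ?thesis by simp
  next
    case False
    then have "a \<le> b" using Suc by simp
    then show ?thesis using Suc by (simp add: sum.cl_ivl_Suc)
  qed
qed

lemma Bm_deriv:
  assumes "m \<ge> 1"
  shows "(Bm m has_real_derivative
            real (2*m-1) * real ((2*m-2) choose (m-1)) * (y*(1-y))^(m-1)) (at y)"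
proof -
  define n where "n = 2*m-1"
  have "((\<lambda>y. \<Sum>i=m..n. real (n choose i) * y^i * (1-y)^(n-i)) has_real_derivative
          (\<Sum>i=m..n. real n * (Tm n (i-1) y - Tm n i y))) (at y)"
    by (rule DERIV_sum) (rule term_deriv, use assms in auto)
  moreover have "(\<Sum>i=m..n. real n * (Tm n (i-1) y - Tm n i y)) = real n * (Tm n (m-1) y - Tm n n y)"
  proof -
    have "(\<Sum>i=m..n. (Tm n (i-1) y - Tm n i y)) = (\<Sum>i=Suc (m-1)..n. (Tm n (i-1) y - Tm n i y))"
      using assms by simp
    also have "\<dots> = Tm n (m-1) y - Tm n n y"
      by (rule telescope_aux) (use assms n_def in auto)
    finally show ?thesis by (simp add: sum_distrib_left[symmetric])
  qed
  moreover have "Tm n n y = 0" unfolding Tm_def using assms n_def by (simp, linarith)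
  moreover have "Tm n (m-1) y = real ((2*m-2) choose (m-1)) * (y*(1-y))^(m-1)"
  proof -
    have a: "n - 1 = 2*m-2" "2*m-2-(m-1) = m-1" using assms n_def by auto
    show ?thesis unfolding Tm_def a(1) unfolding a(2) by (simp add: power_mult_distrib)
  qed
  ultimately show ?thesis unfolding Bm_def n_def[symmetric]
    by (simp add: n_def algebra_simps)
qed

definition cB :: "nat \<Rightarrow> real" where
  "cB m = real (2*m-1) * real ((2*m-2) choose (m-1))"

lemma cB_pos: "m \<ge> 1 \<Longrightarrow> cB m > 0"
  unfolding cB_def by (simp add: zero_less_binomial_iff) 

lemma Bm_deriv': "m \<ge> 1 \<Longrightarrow> (Bm m has_real_derivative cB m * (y*(1-y))^(m-1)) (at y)"
  using Bm_deriv[of m y] unfolding cB_def by simp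

lemma Bm_cont: "m \<ge> 1 \<Longrightarrow> isCont (Bm m) y"
  using Bm_deriv' DERIV_isCont by blast

lemma Bm_0: "m \<ge> 1 \<Longrightarrow> Bm m 0 = 0"
  unfolding Bm_def by (intro sum.neutral) auto

lemma Bm_1: "m \<ge> 1 \<Longrightarrow> Bm m 1 = 1"
proof -
  assume m: "m \<ge> 1"
  have "Bm m 1 = (\<Sum>i\<in>{2*m-1}. real ((2*m-1) choose i) * 1^i * (1-1::real)^(2*m-1-i))"
    unfolding Bm_def by (rule sum.mono_neutral_right) (use m in auto)
  then show ?thesis by simp
qed

definition gB :: "nat \<Rightarrow> real \<Rightarrow> real" where
  "gB m y = y * (cB m * (y*(1-y))^(m-1)) - Bm m y"

lemma gB_deriv:
  assumes "m \<ge> 2"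
  shows "(gB m has_real_derivative cB m * real (m-1) * y * (y*(1-y))^(m-2) * (1 - 2*y)) (at y)"
proof -
  have d1: "((\<lambda>y. y * (cB m * (y*(1-y))^(m-1))) has_real_derivative
      cB m * (y*(1-y))^(m-1) + y * (cB m * (real (m-1) * (y*(1-y))^(m-1-1) * (1 - 2*y)))) (at y)"
    by (auto intro!: derivative_eq_intros simp: algebra_simps)
  have d: "(gB m has_real_derivative
      (cB m * (y*(1-y))^(m-1) + y * (cB m * (real (m-1) * (y*(1-y))^(m-1-1) * (1 - 2*y))))
       - cB m * (y*(1-y))^(m-1)) (at y)"
    unfolding gB_def[abs_def] by (rule DERIV_diff[OF d1 Bm_deriv']) (use assms in auto)
  have "m - 1 - 1 = m - 2" by simp
  then show ?thesis using d by (simp add: algebra_simps)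
qed

lemma gB_cont: "m \<ge> 2 \<Longrightarrow> isCont (gB m) y"
  using gB_deriv DERIV_isCont by blast

lemma gB_0: "m \<ge> 2 \<Longrightarrow> gB m 0 = 0"
  unfolding gB_def using Bm_0 by simp

lemma gB_1: "m \<ge> 2 \<Longrightarrow> gB m 1 = -1"
  unfolding gB_def using Bm_1 by simp

lemma gB_inc:
  assumes m: "m \<ge> 2" and "0 \<le> s" "s < t" "t \<le> 1/2"
  shows "gB m s < gB m t"
proof (rule DERIV_pos_imp_increasing_open[OF \<open>s < t\<close>])
  fix x assume x: "s < x" "x < t"
  have "cB m * real (m-1) * x * (x*(1-x))^(m-2) * (1 - 2*x) > 0"
    using x assms cB_pos[of m] by (intro mult_pos_pos) auto
  then show "\<exists>y. DERIV (gB m) x :> y \<and> 0 < y" using gB_deriv[OF m] by blast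
next
  show "continuous_on {s..t} (gB m)" using gB_cont[OF m] by (simp add: continuous_at_imp_continuous_on)
qed

lemma gB_dec:
  assumes m: "m \<ge> 2" and "1/2 \<le> s" "s < t" "t \<le> 1"
  shows "gB m s > gB m t"
proof (rule DERIV_neg_imp_decreasing_open[OF \<open>s < t\<close>])
  fix x assume x: "s < x" "x < t"
  have "cB m * real (m-1) * x * (x*(1-x))^(m-2) > 0"
    using x assms cB_pos[of m] by (intro mult_pos_pos) auto
  then have "cB m * real (m-1) * x * (x*(1-x))^(m-2) * (1 - 2*x) < 0"
    by (rule mult_pos_neg) (use x assms in auto)
  then show "\<exists>y. DERIV (gB m) x :> y \<and> y < 0" using gB_deriv[OF m] by blast
next
  show "continuous_on {s..t} (gB m)" using gB_cont[OF m] by (simp add: continuous_at_imp_continuous_on)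
qed

definition ystar :: "nat \<Rightarrow> real" where
  "ystar m = (SOME y. 1/2 < y \<and> y < 1 \<and> gB m y = 0)"

lemma ystar_ex:
  assumes m: "m \<ge> 2"
  shows "1/2 < ystar m \<and> ystar m < 1 \<and> gB m (ystar m) = 0"
proof -
  have h: "gB m (1/2) > 0" using gB_inc[OF m, of 0 "1/2"] gB_0[OF m] by simp
  obtain y where y: "1/2 \<le> y" "y \<le> 1" "gB m y = 0"
    using IVT2[of "gB m" 1 0 "1/2"] gB_1[OF m] h gB_cont[OF m] by force
  have "y \<noteq> 1/2"
  proof
    assume "y = 1/2" with h y(3) show False by simp
  qed
  moreover have "y \<noteq> 1" using y(3) gB_1[OF m] by auto
  ultimately have "1/2 < y \<and> y < 1 \<and> gB m y = 0" using y by auto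
  then show ?thesis unfolding ystar_def by (rule someI)
qed

lemma gB_pos:
  assumes m: "m \<ge> 2" and "0 < y" "y < ystar m"
  shows "gB m y > 0"
proof (cases "y \<le> 1/2")
  case True then show ?thesis using gB_inc[OF m, of 0 y] gB_0[OF m] assms by simp
next
  case False then show ?thesis using gB_dec[OF m, of y "ystar m"] ystar_ex[OF m] assms by simp
qed

lemma gB_neg:
  assumes m: "m \<ge> 2" and "ystar m < y" "y \<le> 1"
  shows "gB m y < 0"
  using gB_dec[OF m, of "ystar m" y] ystar_ex[OF m] assms by simp

definition hB :: "nat \<Rightarrow> real \<Rightarrow> real" where
  "hB m y = Bm m y / y"

lemma hB_deriv:
  assumes m: "m \<ge> 2" and "y \<noteq> 0"
  shows "(hB m has_real_derivative gB m y / y^2) (at y)"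
proof -
  have "(hB m has_real_derivative (cB m * (y*(1-y))^(m-1) * y - Bm m y * 1) / (y*y)) (at y)"
    unfolding hB_def[abs_def]
    by (rule DERIV_divide[OF Bm_deriv' DERIV_ident]) (use assms in auto)
  then show ?thesis unfolding gB_def by (simp add: power2_eq_square algebra_simps)
qed

lemma hB_cont_on:
  assumes m: "m \<ge> 2" and s: "0 < s" shows "continuous_on {s..t} (hB m)"
proof (rule continuous_at_imp_continuous_on, intro ballI)
  fix x assume "x \<in> {s..t}"
  then have "x \<noteq> 0" using s by auto
  then show "isCont (hB m) x" using hB_deriv[OF m, of x] DERIV_isCont by blast
qed

lemma hB_inc:
  assumes m: "m \<ge> 2" and "0 < s" "s < t" "t \<le> ystar m"
  shows "hB m s < hB m t"
proof (rule DERIV_pos_imp_increasing_open[OF \<open>s < t\<close>])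
  fix x assume x: "s < x" "x < t"
  have "gB m x / x^2 > 0" using gB_pos[OF m, of x] x assms by simp
  then show "\<exists>y. DERIV (hB m) x :> y \<and> 0 < y" using hB_deriv[OF m, of x] x assms by auto
next
  show "continuous_on {s..t} (hB m)" by (rule hB_cont_on[OF m]) (use assms in simp)
qed

lemma hB_dec:
  assumes m: "m \<ge> 2" and "ystar m \<le> s" "s < t" "t \<le> 1"
  shows "hB m s > hB m t"
proof (rule DERIV_neg_imp_decreasing_open[OF \<open>s < t\<close>])
  fix x assume x: "s < x" "x < t"
  have "x > 0" using x assms ystar_ex[OF m] by simp
  have "gB m x / x^2 < 0" using gB_neg[OF m, of x] x assms \<open>x>0\<close> by (simp add: divide_neg_pos)
  then show "\<exists>y. DERIV (hB m) x :> y \<and> y < 0" using hB_deriv[OF m, of x] \<open>x>0\<close> by auto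
next
  show "continuous_on {s..t} (hB m)" by (rule hB_cont_on[OF m]) (use assms ystar_ex[OF m] in simp)
qed

lemma hB_cont: "m \<ge> 2 \<Longrightarrow> y \<noteq> 0 \<Longrightarrow> isCont (hB m) y"
  using hB_deriv DERIV_isCont by blast

lemma prob_binom_Bm:
  assumes "odd k" "0 \<le> y" "y \<le> 1"
  shows "measure_pmf.prob (binomial_pmf k y) {i. k + 1 \<le> 2 * i} = Bm ((k+1) div 2) y"
proof -
  define m where "m = (k+1) div 2"
  have km: "k = 2*m-1" "m \<ge> 1" using assms(1) unfolding m_def by (auto elim!: oddE)
  have "measure_pmf.prob (binomial_pmf k y) {i. k + 1 \<le> 2 * i} = measure_pmf.prob (binomial_pmf k y) {m..k}"
    by (rule measure_prob_cong_0) (use assms km in auto)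
  also have "\<dots> = (\<Sum>i=m..k. pmf (binomial_pmf k y) i)"
    by (rule measure_measure_pmf_finite) simp
  also have "\<dots> = Bm m y" unfolding Bm_def km(1)[symmetric] using assms by simp
  finally show ?thesis unfolding m_def .
qed

lemma Bm_range:
  assumes "m \<ge> 1" "0 \<le> y" "y \<le> 1"
  shows "0 \<le> Bm m y" "Bm m y \<le> 1"
proof -
  have o: "odd (2*m-1)" using assms by simp
  have e: "(2*m-1+1) div 2 = m" using assms by simp
  have "Bm m y = measure_pmf.prob (binomial_pmf (2*m-1) y) {i. 2*m-1 + 1 \<le> 2 * i}"
    using prob_binom_Bm[OF o assms(2,3)] e by simp
  then show "0 \<le> Bm m y" "Bm m y \<le> 1" by simp_all
qed

lemma F_Bm:
  assumes "odd k" "0 \<le> (1-p)*x" "(1-p)*x \<le> 1"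
  shows "F p k x = Bm ((k+1) div 2) ((1-p)*x)"
  unfolding F_def using prob_binom_Bm[OF assms] .

lemma Bm_small:
  assumes "m \<ge> 2" "0 \<le> y" "y \<le> 1"
  shows "Bm m y \<le> 2^(2*m-1) * y^2"
proof -
  have "Bm m y \<le> (\<Sum>i=m..2*m-1. real ((2*m-1) choose i) * y^2)"
    unfolding Bm_def
  proof (rule sum_mono)
    fix i assume i: "i \<in> {m..2*m-1}"
    have "y^i \<le> y^2" by (rule power_decreasing) (use i assms in auto)
    moreover have "(1-y)^(2*m-1-i) \<le> 1" by (rule power_le_one) (use assms in auto)
    ultimately have "y^i * (1-y)^(2*m-1-i) \<le> y^2"
      by (metis assms(2,3) diff_ge_0_iff_ge mult_le_one mult.commute mult_right_le_one_le zero_le_power order_trans mult_left_mono mult.right_neutral)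
    then show "real ((2*m-1) choose i) * y^i * (1-y)^(2*m-1-i) \<le> real ((2*m-1) choose i) * y^2"
      by (metis mult.assoc mult_left_mono of_nat_0_le_iff)
  qed
  also have "\<dots> = (\<Sum>i=m..2*m-1. real ((2*m-1) choose i)) * y^2" by (simp add: sum_distrib_right)
  also have "\<dots> \<le> (\<Sum>i\<le>2*m-1. real ((2*m-1) choose i)) * y^2"
    by (intro mult_right_mono sum_mono2) auto
  also have "(\<Sum>i\<le>2*m-1. real ((2*m-1) choose i)) = 2^(2*m-1)"
    using choose_row_sum[of "2*m-1"] by (metis of_nat_numeral of_nat_power of_nat_sum)
  finally show ?thesis .
qed

definition HB :: "nat \<Rightarrow> real" where "HB m = hB m (ystar m)"

lemma hB_1: "m \<ge> 2 \<Longrightarrow> hB m 1 = 1"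
  unfolding hB_def using Bm_1 by simp

lemma hB_le_H:
  assumes m: "m \<ge> 2" and "0 < y" "y \<le> 1"
  shows "hB m y \<le> HB m"
  using hB_inc[OF m, of y "ystar m"] hB_dec[OF m, of "ystar m" y] assms ystar_ex[OF m]
  unfolding HB_def by (cases "y < ystar m"; cases "y = ystar m") auto

lemma hB_lt_H:
  assumes m: "m \<ge> 2" and "0 < y" "y \<le> 1" "y \<noteq> ystar m"
  shows "hB m y < HB m"
  using hB_inc[OF m, of y "ystar m"] hB_dec[OF m, of "ystar m" y] assms ystar_ex[OF m]
  unfolding HB_def by (cases "y < ystar m") auto

lemma H_gt1: "m \<ge> 2 \<Longrightarrow> HB m > 1"
  using hB_lt_H[of m 1] hB_1 ystar_ex by force

lemma H_lt2: 
  assumes m: "m \<ge> 2" shows "HB m < 2"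
proof -
  have y: "1/2 < ystar m" "ystar m < 1" using ystar_ex[OF m] by auto
  have "Bm m (ystar m) \<le> 1" using Bm_range[of m "ystar m"] m y by auto
  then have "HB m \<le> 1 / ystar m" unfolding HB_def hB_def using y by (simp add: divide_right_mono)
  also have "\<dots> < 2" using y by (simp add: field_simps)
  finally show ?thesis .
qed

lemma hB_bound:
  assumes "m \<ge> 2" "0 < y" "y \<le> 1"
  shows "hB m y \<le> 1 / y"
  unfolding hB_def using Bm_range[of m y] assms by (simp add: divide_right_mono)

lemma odd_m: "odd (k::nat) \<Longrightarrow> k \<ge> 3 \<Longrightarrow> (k+1) div 2 \<ge> 2"
  by (auto elim!: oddE)

lemma F_zero: "odd k \<Longrightarrow> k \<ge> 3 \<Longrightarrow> F p k 0 = 0"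
  using F_Bm[of k p 0] Bm_0[of "(k+1) div 2"] odd_m by simp

lemma F_p1: "odd k \<Longrightarrow> k \<ge> 3 \<Longrightarrow> F 1 k x = 0"
  using F_Bm[of k 1 x] Bm_0[of "(k+1) div 2"] odd_m by simp

lemma F_hB:
  assumes "odd k" "k \<ge> 3" "0 \<le> p" "p < 1" "0 < x" "x \<le> 1"
  shows "F p k x = x * ((1-p) * hB ((k+1) div 2) ((1-p)*x))"
proof -
  have "0 \<le> (1-p)*x" "(1-p)*x \<le> 1" using assms by (auto simp: mult_le_one)
  then have "F p k x = Bm ((k+1) div 2) ((1-p)*x)" using F_Bm assms by blast
  then show ?thesis unfolding hB_def using assms by (simp add: field_simps)
qed

lemma sign_aux:
  fixes x a h :: real
  assumes "0 < x" "0 < a"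
  shows "x*(a*h) = x \<longleftrightarrow> h = 1/a" "x*(a*h) < x \<longleftrightarrow> h < 1/a" "x*(a*h) > x \<longleftrightarrow> h > 1/a"
proof -
  have "x*(a*h) = x \<longleftrightarrow> a*h = 1" using assms by simp
  also have "\<dots> \<longleftrightarrow> h = 1/a" using assms by (auto simp: field_simps)
  finally show "x*(a*h) = x \<longleftrightarrow> h = 1/a" .
  have "x*(a*h) < x \<longleftrightarrow> a*h < 1" using assms by (simp add: mult_less_cancel_left1)
  also have "\<dots> \<longleftrightarrow> h < 1/a" using assms by (simp add: pos_less_divide_eq mult.commute)
  finally show "x*(a*h) < x \<longleftrightarrow> h < 1/a" .
  have "x*(a*h) > x \<longleftrightarrow> a*h > 1" using assms by (simp add: mult_less_cancel_left2)
  also have "\<dots> \<longleftrightarrow> h > 1/a" using assms by (simp add: pos_divide_less_eq mult.commute)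
  finally show "x*(a*h) > x \<longleftrightarrow> h > 1/a" .
qed

lemma F_eq_iff:
  assumes "odd k" "k \<ge> 3" "0 \<le> p" "p < 1" "0 < x" "x \<le> 1"
  shows "F p k x = x \<longleftrightarrow> hB ((k+1) div 2) ((1-p)*x) = 1/(1-p)"
  using F_hB[OF assms] sign_aux(1)[of x "1-p"] assms by simp

lemma F_lt_iff:
  assumes "odd k" "k \<ge> 3" "0 \<le> p" "p < 1" "0 < x" "x \<le> 1"
  shows "F p k x < x \<longleftrightarrow> hB ((k+1) div 2) ((1-p)*x) < 1/(1-p)"
  using F_hB[OF assms] sign_aux(2)[of x "1-p"] assms by simp

lemma F_gt_iff:
  assumes "odd k" "k \<ge> 3" "0 \<le> p" "p < 1" "0 < x" "x \<le> 1"
  shows "F p k x > x \<longleftrightarrow> hB ((k+1) div 2) ((1-p)*x) > 1/(1-p)"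
  using F_hB[OF assms] sign_aux(3)[of x "1-p"] assms by simp

lemma y_le_a:
  assumes m: "m \<ge> 2" and "0 < y" "y \<le> 1" "0 < a" "hB m y = 1/a"
  shows "y \<le> a"
proof -
  have "1/a \<le> 1/y" using hB_bound[OF m, of y] assms by simp
  then show ?thesis using assms by (simp add: field_simps)
qed

lemma fix_point_from_y:
  assumes "odd k" "k \<ge> 3" "0 \<le> p" "p < 1" "0 < y" "y \<le> 1"
    and h: "hB ((k+1) div 2) y = 1/(1-p)"
  shows "y/(1-p) \<in> fixpoints p k" "y/(1-p) > 0"
proof -
  have le: "y \<le> 1-p" using y_le_a[OF odd_m[OF assms(1,2)]] assms by simp
  then have x: "0 < y/(1-p)" "y/(1-p) \<le> 1" using assms by auto
  have "(1-p) * (y/(1-p)) = y" using assms by simp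
  then have "F p k (y/(1-p)) = y/(1-p)" using F_eq_iff[OF assms(1-4) x] h by simp
  then show "y/(1-p) \<in> fixpoints p k" unfolding fixpoints_def using x by simp
  show "y/(1-p) > 0" using x by simp
qed

lemma fix_R1:
  assumes "odd k" "k \<ge> 3" "0 \<le> p" "p \<le> 1" and H: "(1-p) * HB ((k+1) div 2) < 1"
  shows "fixpoints p k = {0}"
proof -
  define m where "m = (k+1) div 2"
  have m: "m \<ge> 2" unfolding m_def using odd_m assms by simp
  have "x = 0" if x: "x \<in> fixpoints p k" for x
  proof (rule ccontr)
    assume "x \<noteq> 0"
    with x have x': "0 < x" "x \<le> 1" "F p k x = x" unfolding fixpoints_def by auto
    show False
    proof (cases "p = 1")
      case True then show False using F_p1[OF assms(1,2)] x' by simp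
    next
      case False
      then have p: "p < 1" using assms by simp
      have "hB m ((1-p)*x) = 1/(1-p)" using F_eq_iff[OF assms(1,2,3) p x'(1,2)] x'(3) m_def by simp
      moreover have "hB m ((1-p)*x) \<le> HB m"
        by (rule hB_le_H[OF m]) (use x' p assms in \<open>auto simp: mult_le_one\<close>)
      moreover have "HB m < 1/(1-p)" using H p m_def by (simp add: field_simps)
      ultimately show False by simp
    qed
  qed
  moreover have "0 \<in> fixpoints p k" unfolding fixpoints_def using F_zero[OF assms(1,2)] by simp
  ultimately show ?thesis by blast
qed

lemma fix_R2:
  assumes "odd k" "k \<ge> 3" "0 \<le> p" "p \<le> 1" and H: "(1-p) * HB ((k+1) div 2) = 1"
  shows "fixpoints p k = {0, ystar ((k+1) div 2) / (1-p)}" "ystar ((k+1) div 2) / (1-p) \<noteq> 0"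
proof -
  define m where "m = (k+1) div 2"
  have m: "m \<ge> 2" unfolding m_def using odd_m assms by simp
  have p: "p < 1" using H assms by (cases "p = 1") auto
  have c: "1/(1-p) = HB m" using H p m_def by (simp add: field_simps)
  have ys: "1/2 < ystar m" "ystar m < 1" using ystar_ex[OF m] by auto
  have "x = 0 \<or> x = ystar m/(1-p)" if x: "x \<in> fixpoints p k" for x
  proof (rule ccontr)
    assume "\<not> (x = 0 \<or> x = ystar m/(1-p))"
    with x have x': "0 < x" "x \<le> 1" "F p k x = x" "x \<noteq> ystar m/(1-p)" unfolding fixpoints_def by auto
    have "hB m ((1-p)*x) = 1/(1-p)" using F_eq_iff[OF assms(1,2,3) p x'(1,2)] x'(3) m_def by simp
    moreover have "(1-p)*x \<noteq> ystar m" using x'(4) p by (auto simp: field_simps)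
    then have "hB m ((1-p)*x) < HB m"
      by (intro hB_lt_H[OF m]) (use x' p assms in \<open>auto simp: mult_le_one\<close>)
    ultimately show False using c by simp
  qed
  moreover have "0 \<in> fixpoints p k" unfolding fixpoints_def using F_zero[OF assms(1,2)] by simp
  moreover have "ystar m/(1-p) \<in> fixpoints p k" "ystar m/(1-p) > 0"
    using fix_point_from_y[OF assms(1,2,3) p, of "ystar m"] ys c unfolding m_def HB_def by auto
  ultimately show "fixpoints p k = {0, ystar ((k+1) div 2) / (1-p)}" "ystar ((k+1) div 2) / (1-p) \<noteq> 0"
    unfolding m_def by auto
qed

lemma Bm_step:
  "Bm (Suc (Suc n)) y - Bm (Suc n) y = real ((2*n+1) choose (Suc n)) * (y*(1-y))^(Suc n) * (2*y-1)"
proof -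
  define C where "C = real ((2*n+1) choose (Suc n))"
  define D where "D = (\<lambda>y. Bm (Suc (Suc n)) y - Bm (Suc n) y - C * (y*(1-y))^(Suc n) * (2*y-1))"
  have c1: "cB (Suc (Suc n)) = (4*real n + 6) * C"
  proof -
    have "(2*n+2) choose (Suc n) = ((2*n+1) choose n) + ((2*n+1) choose (Suc n))"
      using binomial_Suc_Suc[of "2*n+1" n] by simp
    moreover have "(2*n+1) choose n = (2*n+1) choose (Suc n)"
      using binomial_symmetric[of n "2*n+1"] by (simp add: Suc_diff_le)
    ultimately have "(2*n+2) choose (Suc n) = 2 * ((2*n+1) choose (Suc n))" by simp
    then have "real ((2*n+2) choose (Suc n)) = 2 * C" unfolding C_def by simp
    moreover have "2 * Suc (Suc n) - 2 = 2*n+2" "2 * Suc (Suc n) - 1 = 2*n+3" by simp_all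
    ultimately show ?thesis unfolding cB_def by simp
  qed
  have c2: "cB (Suc n) = real (Suc n) * C"
  proof -
    have "Suc (2*n) * ((2*n) choose n) = (Suc (2*n) choose Suc n) * Suc n"
      by (rule Suc_times_binomial_eq)
    then have "real (Suc (2*n) * ((2*n) choose n)) = real ((Suc (2*n) choose Suc n) * Suc n)"
      by (rule arg_cong)
    then have "real (2*n+1) * real ((2*n) choose n) = C * real (Suc n)"
      unfolding C_def by (simp only: of_nat_mult Suc_eq_plus1)
    moreover have "2 * Suc n - 2 = 2*n" "2 * Suc n - 1 = 2*n+1" by simp_all
    ultimately show ?thesis unfolding cB_def by (simp add: mult.commute)
  qed
  have "(D has_real_derivative 0) (at x)" for x
  proof -
    have dA: "(Bm (Suc (Suc n)) has_real_derivative cB (Suc (Suc n)) * (x*(1-x))^(Suc n)) (at x)"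
      using Bm_deriv'[of "Suc (Suc n)" x] by simp
    have dB: "(Bm (Suc n) has_real_derivative cB (Suc n) * (x*(1-x))^n) (at x)"
      using Bm_deriv'[of "Suc n" x] by simp
    have dE: "((\<lambda>y. C * (y*(1-y))^(Suc n) * (2*y-1)) has_real_derivative
        C * (real (Suc n) * (x*(1-x))^n * (1 - 2*x)) * (2*x-1) + C * (x*(1-x))^(Suc n) * 2) (at x)"
    proof -
      have u: "((\<lambda>y. y*(1-y)) has_real_derivative (1 - 2*x)) (at x)"
        by (auto intro!: derivative_eq_intros)
      have "((\<lambda>y. (y*(1-y))^(Suc n)) has_real_derivative (1 + real n) * ((1 - 2*x) * (x*(1-x))^n)) (at x)"
        by (rule DERIV_power_Suc[OF u])
      then have p: "((\<lambda>y. (y*(1-y))^(Suc n)) has_real_derivative real (Suc n) * (x*(1-x))^n * (1 - 2*x)) (at x)"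
        by (simp add: mult.commute mult.left_commute)
      have l: "((\<lambda>y. 2*y-1) has_real_derivative 2) (at x)"
        by (auto intro!: derivative_eq_intros)
      have d2: "((\<lambda>y. C * (y*(1-y))^(Suc n) * (2*y-1)) has_real_derivative
          C * (real (Suc n) * (x*(1-x))^n * (1 - 2*x) * (2*x-1) + 2 * (x*(1-x))^(Suc n))) (at x)"
        using DERIV_cmult[OF DERIV_mult[OF p l], of C] by (simp only: mult.assoc)
      show ?thesis by (rule DERIV_cong[OF d2]) (simp add: algebra_simps)
    qed
    have d: "(D has_real_derivative
        cB (Suc (Suc n)) * (x*(1-x))^(Suc n) - cB (Suc n) * (x*(1-x))^n
        - (C * (real (Suc n) * (x*(1-x))^n * (1 - 2*x)) * (2*x-1) + C * (x*(1-x))^(Suc n) * 2)) (at x)"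
      unfolding D_def by (intro DERIV_diff dA dB dE)
    have alg: "\<And>w. (4*real n + 6) * C * ((x*(1-x)) * w) - real (Suc n) * C * w
        - (C * (real (Suc n) * w * (1 - 2*x)) * (2*x-1) + C * ((x*(1-x)) * w) * 2) = 0"
      by (simp add: algebra_simps)
    have "cB (Suc (Suc n)) * (x*(1-x))^(Suc n) - cB (Suc n) * (x*(1-x))^n
        - (C * (real (Suc n) * (x*(1-x))^n * (1 - 2*x)) * (2*x-1) + C * (x*(1-x))^(Suc n) * 2) = 0"
      unfolding c1 c2 power_Suc using alg[of "(x*(1-x))^n"] by simp
    with d show ?thesis by simp
  qed
  then have "D y = D 0" using DERIV_isconst_all by blast
  also have "D 0 = 0" unfolding D_def using Bm_0[of "Suc n"] Bm_0[of "Suc (Suc n)"] by simp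
  finally show ?thesis unfolding D_def C_def by simp
qed


lemma Bm_ge_B2:
  assumes "m \<ge> 2" "1/2 \<le> y" "y \<le> 1"
  shows "Bm 2 y \<le> Bm m y"
  using assms(1)
proof (induction m rule: dec_induct)
  case base then show ?case by simp
next
  case (step n)
  then obtain n' where n': "n = Suc n'" by (cases n) auto
  have "0 \<le> real ((2*n'+1) choose (Suc n')) * (y*(1-y))^(Suc n') * (2*y-1)"
    using assms by (intro mult_nonneg_nonneg) auto
  then have "Bm n y \<le> Bm (Suc n) y" using Bm_step[of n' y] n' by simp
  then show ?case using step by simp
qed

lemma Bm2_34: "Bm 2 (3/4) = 27/32"
  by (simp add: Bm_def eval_nat_numeral)

lemma H_ge: assumes m: "m \<ge> 2" shows "HB m \<ge> 9/8"
proof -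
  have "27/32 \<le> Bm m (3/4)" using Bm_ge_B2[OF m, of "3/4"] Bm2_34 by simp
  then have "9/8 \<le> hB m (3/4)" unfolding hB_def by simp
  also have "\<dots> \<le> HB m" by (rule hB_le_H[OF m]) auto
  finally show ?thesis .
qed

lemma fix_R3:
  assumes "odd k" "k \<ge> 3" "0 \<le> p" "p \<le> 1" and H: "(1-p) * HB ((k+1) div 2) > 1"
  shows "\<exists>\<phi>1 \<phi>2. 0 < \<phi>1 \<and> \<phi>1 < \<phi>2 \<and> \<phi>2 \<le> 1 \<and> fixpoints p k = {0, \<phi>1, \<phi>2}
      \<and> (\<forall>x. 0 < x \<and> x < \<phi>1 \<longrightarrow> F p k x < x) \<and> (\<forall>x. \<phi>1 < x \<and> x < \<phi>2 \<longrightarrow> F p k x > x)"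
proof -
  define m where "m = (k+1) div 2"
  have m: "m \<ge> 2" unfolding m_def using odd_m assms by simp
  have p: "p < 1" using H assms by (cases "p = 1") auto
  define a where "a = 1 - p"
  have a: "0 < a" "a \<le> 1" using p assms unfolding a_def by auto
  define c where "c = 1/a"
  have c1: "1 \<le> c" unfolding c_def using a by simp
  have cH: "c < HB m" using H a unfolding c_def a_def m_def by (simp add: field_simps)
  have ys: "1/2 < ystar m" "ystar m < 1" using ystar_ex[OF m] by auto
  define y0 where "y0 = min (ystar m / 2) (1 / 2^(2*m))"
  have y0: "0 < y0" "y0 < ystar m" "y0 \<le> 1 / 2^(2*m)" using ys unfolding y0_def by auto
  have "hB m y0 \<le> 2^(2*m-1) * y0"
  proof -
    have "Bm m y0 \<le> 2^(2*m-1) * y0^2" by (rule Bm_small[OF m]) (use y0 ys in auto)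
    then show ?thesis unfolding hB_def using y0 by (simp add: field_simps power2_eq_square)
  qed
  also have "\<dots> \<le> 2^(2*m-1) * (1 / 2^(2*m))" using y0 by (intro mult_left_mono) auto
  also have "\<dots> = 1/2"
  proof -
    have "(2::real)^(2*m) = 2 * 2^(2*m-1)" using m by (metis Suc_diff_1 less_le_trans mult_pos_pos pos2 power_Suc zero_less_numeral)
    then show ?thesis by simp
  qed
  finally have hy0: "hB m y0 < c" using c1 by simp
  have contI: "\<forall>x. s \<le> x \<and> x \<le> t \<longrightarrow> isCont (hB m) x" if "0 < s" for s t
    using hB_cont[OF m] that by auto
  obtain y1 where y1: "y0 \<le> y1" "y1 \<le> ystar m" "hB m y1 = c"
    using IVT[of "hB m" y0 c "ystar m"] hy0 cH y0 contI[OF y0(1)] unfolding HB_def by auto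
  have y1': "0 < y1" "y1 < ystar m" using y1 y0 cH unfolding HB_def by (auto simp: less_le)
  obtain y2 where y2: "ystar m \<le> y2" "y2 \<le> 1" "hB m y2 = c"
    using IVT2[of "hB m" 1 c "ystar m"] hB_1[OF m] c1 cH ys contI[of "ystar m"] unfolding HB_def by auto
  have y2': "ystar m < y2" using y2 cH unfolding HB_def by (auto simp: less_le)
  have uniq: "y = y1 \<or> y = y2" if y: "0 < y" "y \<le> 1" "hB m y = c" for y
  proof (cases "y \<le> ystar m")
    case True
    have "\<not> y < y1" using hB_inc[OF m, of y y1] y y1 y1' by auto
    moreover have "\<not> y1 < y" using hB_inc[OF m, of y1 y] y y1 y1' True by auto
    ultimately show ?thesis by simp
  next
    case False
    have "\<not> y < y2" using hB_dec[OF m, of y y2] y y2 False by auto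
    moreover have "\<not> y2 < y" using hB_dec[OF m, of y2 y] y y2 y2' by auto
    ultimately show ?thesis by simp
  qed
  have pa: "1 - p = a" unfolding a_def by simp
  note fy1 = fix_point_from_y[OF assms(1,2,3) p, of y1, unfolded pa m_def[symmetric]]
  note fy2 = fix_point_from_y[OF assms(1,2,3) p, of y2, unfolded pa m_def[symmetric]]
  have f1: "y1/a \<in> fixpoints p k" "0 < y1/a" using fy1 y1 y1' ys c_def by auto
  have f2: "y2/a \<in> fixpoints p k" using fy2 y2 y2' ys c_def by auto
  have lt: "y1/a < y2/a" using y1' y2' a by (simp add: divide_strict_right_mono)
  have le1: "y2/a \<le> 1" using f2 unfolding fixpoints_def by simp
  have set: "fixpoints p k = {0, y1/a, y2/a}"
  proof
    show "{0, y1/a, y2/a} \<subseteq> fixpoints p k"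
      using f1 f2 F_zero[OF assms(1,2)] unfolding fixpoints_def by auto
  next
    show "fixpoints p k \<subseteq> {0, y1/a, y2/a}"
    proof
      fix x assume x: "x \<in> fixpoints p k"
      show "x \<in> {0, y1/a, y2/a}"
      proof (cases "x = 0")
        case False
        with x have x': "0 < x" "x \<le> 1" "F p k x = x" unfolding fixpoints_def by auto
        have "hB m (a*x) = c" using F_eq_iff[OF assms(1,2,3) p x'(1,2)] x'(3) unfolding m_def c_def a_def by simp
        moreover have "0 < a*x" "a*x \<le> 1" using a x' by (auto simp: mult_le_one)
        ultimately have "a*x = y1 \<or> a*x = y2" using uniq by blast
        then show ?thesis using a by (auto simp: field_simps)
      qed simp
    qed
  qed
  have s1: "F p k x < x" if "0 < x" "x < y1/a" for x
  proof -
    have x1: "x \<le> 1" using that lt le1 by simp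
    have "a*x < y1" using that a by (simp add: field_simps)
    then have "hB m (a*x) < hB m y1" using hB_inc[OF m, of "a*x" y1] y1' that a by simp
    then show ?thesis using F_lt_iff[OF assms(1,2,3) p that(1) x1] y1 unfolding m_def c_def a_def by simp
  qed
  have s2: "F p k x > x" if "y1/a < x" "x < y2/a" for x
  proof -
    have x1: "0 < x" "x \<le> 1" using that lt le1 f1 by auto
    have ax: "y1 < a*x" "a*x < y2" using that a by (simp_all add: field_simps)
    have "hB m (a*x) > c"
    proof (cases "a*x \<le> ystar m")
      case True then show ?thesis using hB_inc[OF m, of y1 "a*x"] y1 y1' ax by simp
    next
      case False then show ?thesis using hB_dec[OF m, of "a*x" y2] y2 ax by simp
    qed
    then show ?thesis using F_gt_iff[OF assms(1,2,3) p x1] unfolding m_def c_def a_def by simp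
  qed
  show ?thesis
    by (rule exI[of _ "y1/a"], rule exI[of _ "y2/a"]) (use f1 lt le1 set s1 s2 in auto)
qed

lemma p_star_eq:
  assumes k: "odd k" "k \<ge> 3"
  shows "p_star k = 1 - 1 / HB ((k+1) div 2)"
proof -
  define m where "m = (k+1) div 2"
  have m: "m \<ge> 2" unfolding m_def using odd_m k by simp
  define ps where "ps = 1 - 1 / HB m"
  have H: "9/8 \<le> HB m" "HB m < 2" using H_ge[OF m] H_lt2[OF m] by auto
  have ps: "1/9 \<le> ps" "ps < 1/2" unfolding ps_def using H by (auto simp: field_simps)
  have r3: "card (fixpoints p k) = 3" if pp: "0 \<le> p" "p < ps" for p
  proof -
    have "(1-p) * HB m > 1" using pp H unfolding ps_def by (auto simp: field_simps)
    then obtain \<phi>1 \<phi>2 where "0 < \<phi>1" "\<phi>1 < \<phi>2" "fixpoints p k = {0, \<phi>1, \<phi>2}"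
      using fix_R3[OF k pp(1)] pp ps unfolding m_def by auto
    then show ?thesis by simp
  qed
  have r1: "fixpoints p k = {0}" if "ps < p" "p \<le> 1" for p
  proof -
    have "(1-p) * HB m < 1" using that H unfolding ps_def by (auto simp: field_simps)
    then show ?thesis using fix_R1[OF k, of p] that ps unfolding m_def by auto
  qed
  have r2: "card (fixpoints ps k) = 2"
  proof -
    have "(1-ps) * HB m = 1" using H unfolding ps_def by (auto simp: field_simps)
    then show ?thesis using fix_R2[OF k, of ps] ps unfolding m_def by auto
  qed
  have P: "ps \<in> {1/9..<1/2} \<and>
      (\<forall>p. 0 \<le> p \<and> p < ps \<longrightarrow> card (fixpoints p k) = 3) \<and>
      card (fixpoints ps k) = 2 \<and>
      (\<forall>p. ps < p \<and> p \<le> 1 \<longrightarrow> fixpoints p k = {0})"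
    using ps r1 r2 r3 by auto
  have "p_star k = ps" unfolding p_star_def
  proof (rule the_equality, rule P)
    fix x assume x: "x \<in> {1/9..<1/2} \<and>
      (\<forall>p. 0 \<le> p \<and> p < x \<longrightarrow> card (fixpoints p k) = 3) \<and>
      card (fixpoints x k) = 2 \<and>
      (\<forall>p. x < p \<and> p \<le> 1 \<longrightarrow> fixpoints p k = {0})"
    show "x = ps"
    proof (rule linorder_cases[of x ps])
      assume "x < ps" then have "card (fixpoints x k) = 3" using r3[of x] x by auto
      then show ?thesis using x by simp
    next
      assume "ps < x" then have "fixpoints x k = {0}" using r1[of x] x by auto
      then show ?thesis using x by simp
    qed
  qed
  then show ?thesis unfolding ps_def m_def .
qed

lemma mono_iter:
  fixes f :: "real \<Rightarrow> real"
  assumes cont: "continuous_on {0..1} f"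
    and mono: "\<And>x y. 0 \<le> x \<Longrightarrow> x \<le> y \<Longrightarrow> y \<le> 1 \<Longrightarrow> f x \<le> f y"
    and range: "\<And>x. 0 \<le> x \<Longrightarrow> x \<le> 1 \<Longrightarrow> 0 \<le> f x \<and> f x \<le> 1"
    and q: "0 \<le> q" "q \<le> 1"
  shows "\<exists>L. (\<lambda>t. (f^^t) q) \<longlonglongrightarrow> L \<and> 0 \<le> L \<and> L \<le> 1 \<and> f L = L
          \<and> (f q \<le> q \<longrightarrow> L \<le> q) \<and> (q < f q \<longrightarrow> q \<le> L)"
proof -
  define u where "u = (\<lambda>t. (f^^t) q)"
  have u01: "0 \<le> u t \<and> u t \<le> 1" for t
    by (induction t) (use q range in \<open>auto simp: u_def\<close>)
  have uS: "u (Suc t) = f (u t)" for t unfolding u_def by simp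
  have fixL: "f L = L" if L: "u \<longlonglongrightarrow> L" "0 \<le> L" "L \<le> 1" for L
  proof -
    have "((\<lambda>t. f (u t)) \<longlonglongrightarrow> f L)"
      by (rule continuous_on_tendsto_compose[OF cont L(1)]) (use L u01 in auto)
    moreover have "(\<lambda>t. f (u t)) = (\<lambda>t. u (Suc t))" using uS by (auto simp: fun_eq_iff)
    ultimately have "(\<lambda>t. u (Suc t)) \<longlonglongrightarrow> f L" by simp
    moreover have "(\<lambda>t. u (Suc t)) \<longlonglongrightarrow> L" using LIMSEQ_Suc[OF L(1)] .
    ultimately show ?thesis using LIMSEQ_unique by blast
  qed
  show ?thesis
  proof (cases "f q \<le> q")
    case True
    have dec: "u (Suc t) \<le> u t" for t
    proof (induction t)
      case 0 then show ?case using True by (simp add: u_def)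
    next
      case (Suc t) then show ?case using mono[of "u (Suc t)" "u t"] u01[of t] u01[of "Suc t"] uS[of t] uS[of "Suc t"] by simp
    qed
    then have "decseq u" by (simp add: decseq_SucI)
    then obtain L where L: "u \<longlonglongrightarrow> L" "\<forall>i. L \<le> u i" using decseq_convergent[of u 0] u01 by auto
    have L01: "0 \<le> L" "L \<le> 1" using LIMSEQ_le_const[OF L(1), of 0] u01 L(2)[rule_format, of 0] q by (auto simp: u_def)
    have "L \<le> q" using L(2)[rule_format, of 0] by (simp add: u_def)
    then show ?thesis using L L01 fixL[OF L(1) L01] True unfolding u_def by (intro exI[of _ L]) auto
  next
    case False
    have inc: "u t \<le> u (Suc t)" for t
    proof (induction t)
      case 0 then show ?case using False by (simp add: u_def)
    next
      case (Suc t) then show ?case using mono[of "u t" "u (Suc t)"] u01[of t] u01[of "Suc t"] uS[of t] uS[of "Suc t"] by simp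
    qed
    then have "incseq u" by (simp add: incseq_SucI)
    then obtain L where L: "u \<longlonglongrightarrow> L" "\<forall>i. u i \<le> L" using incseq_convergent[of u 1] u01 by auto
    have L01: "0 \<le> L" "L \<le> 1" using LIMSEQ_le_const2[OF L(1), of 1] u01 L(2)[rule_format, of 0] q by (auto simp: u_def)
    have "q \<le> L" using L(2)[rule_format, of 0] by (simp add: u_def)
    then show ?thesis using L L01 fixL[OF L(1) L01] False unfolding u_def by (intro exI[of _ L]) auto
  qed
qed

lemma iter_le_fix:
  fixes f :: "real \<Rightarrow> real"
  assumes mono: "\<And>x y. 0 \<le> x \<Longrightarrow> x \<le> y \<Longrightarrow> y \<le> 1 \<Longrightarrow> f x \<le> f y"
    and range: "\<And>x. 0 \<le> x \<Longrightarrow> x \<le> 1 \<Longrightarrow> 0 \<le> f x \<and> f x \<le> 1"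
    and z: "0 \<le> z" "z \<le> 1" "f z = z" and q: "0 \<le> q" "q \<le> 1"
  shows "q \<le> z \<Longrightarrow> (f^^t) q \<le> z" and "z \<le> q \<Longrightarrow> z \<le> (f^^t) q"
proof -
  have u01: "0 \<le> (f^^t) q \<and> (f^^t) q \<le> 1" for t
    by (induction t) (use q range in auto)
  show "q \<le> z \<Longrightarrow> (f^^t) q \<le> z"
  proof (induction t)
    case (Suc t) then show ?case using mono[of "(f^^t) q" z] u01[of t] z by simp
  qed simp
  show "z \<le> q \<Longrightarrow> z \<le> (f^^t) q"
  proof (induction t)
    case (Suc t) then show ?case using mono[of z "(f^^t) q"] u01[of t] z by simp
  qed simp
qed

lemma Bm_mono:
  assumes m: "m \<ge> 2" and "0 \<le> s" "s \<le> t" "t \<le> 1"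
  shows "Bm m s \<le> Bm m t"
proof (rule DERIV_nonneg_imp_nondecreasing[OF \<open>s \<le> t\<close>])
  fix x assume x: "s \<le> x" "x \<le> t"
  have "cB m * (x*(1-x))^(m-1) \<ge> 0" using cB_pos[of m] m x assms by (intro mult_nonneg_nonneg) auto
  then show "\<exists>y. DERIV (Bm m) x :> y \<and> 0 \<le> y" using Bm_deriv'[of m x] m by auto
qed

lemma F_props:
  assumes k: "odd k" "k \<ge> 3" and p: "0 \<le> p" "p \<le> 1"
  shows "continuous_on {0..1} (F p k)"
    and "\<And>x y. 0 \<le> x \<Longrightarrow> x \<le> y \<Longrightarrow> y \<le> 1 \<Longrightarrow> F p k x \<le> F p k y"
    and "\<And>x. 0 \<le> x \<Longrightarrow> x \<le> 1 \<Longrightarrow> 0 \<le> F p k x \<and> F p k x \<le> 1"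
proof -
  define m where "m = (k+1) div 2"
  have m: "m \<ge> 2" unfolding m_def using odd_m k by simp
  have FB: "F p k x = Bm m ((1-p)*x)" if "0 \<le> x" "x \<le> 1" for x
    unfolding m_def by (rule F_Bm[OF k(1)]) (use that p in \<open>auto simp: mult_le_one\<close>)
  have "continuous_on {0..1} (\<lambda>x. Bm m ((1-p)*x))"
  proof (rule continuous_at_imp_continuous_on, intro ballI)
    fix x :: real
    show "isCont (\<lambda>x. Bm m ((1-p)*x)) x"
      by (rule isCont_o2[OF _ Bm_cont]) (use m in auto)
  qed
  then show "continuous_on {0..1} (F p k)" by (rule continuous_on_cong[THEN iffD1, rotated 2]) (auto simp: FB)
  show "F p k x \<le> F p k y" if "0 \<le> x" "x \<le> y" "y \<le> 1" for x y
  proof -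
    have "Bm m ((1-p)*x) \<le> Bm m ((1-p)*y)"
      by (rule Bm_mono[OF m]) (use that p in \<open>auto simp: mult_left_mono mult_le_one\<close>)
    then show ?thesis using FB[of x] FB[of y] that by simp
  qed
  show "0 \<le> F p k x \<and> F p k x \<le> 1" if "0 \<le> x" "x \<le> 1" for x
    using FB[OF that] Bm_range[of m "(1-p)*x"] m that p by (auto simp: mult_le_one)
qed

lemma main_analysis:
  assumes k: "odd k" "k \<ge> 3" and p: "0 \<le> p" "p \<le> 1" and q: "0 \<le> q" "q \<le> 1"
  shows "(p < p_star k \<and> q > phi_minus p k \<longrightarrow>
            (\<lambda>t. (F p k ^^ t) q) \<longlonglongrightarrow> phi_plus p k)
       \<and> (p < p_star k \<and> q < phi_minus p k \<longrightarrow>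
            (\<lambda>t. (F p k ^^ t) q) \<longlonglongrightarrow> 0)
       \<and> (p > p_star k \<longrightarrow> (\<lambda>t. (F p k ^^ t) q) \<longlonglongrightarrow> 0)"
proof -
  define m where "m = (k+1) div 2"
  have m: "m \<ge> 2" unfolding m_def using odd_m k by simp
  note FP = F_props[OF k p]
  obtain L where L: "(\<lambda>t. (F p k^^t) q) \<longlonglongrightarrow> L" "0 \<le> L" "L \<le> 1" "F p k L = L"
     "F p k q \<le> q \<longrightarrow> L \<le> q" "q < F p k q \<longrightarrow> q \<le> L"
    using mono_iter[OF FP q] by blast
  have Lfix: "L \<in> fixpoints p k" unfolding fixpoints_def using L by simp
  have ps: "p_star k = 1 - 1 / HB m" using p_star_eq[OF k] m_def by simp
  have H: "HB m > 1" using H_gt1[OF m] .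
  have c3: "(\<lambda>t. (F p k ^^ t) q) \<longlonglongrightarrow> 0" if "p > p_star k"
  proof -
    have "(1-p) * HB m < 1" using that ps H by (auto simp: field_simps)
    then have "fixpoints p k = {0}" using fix_R1[OF k p] m_def by simp
    then show ?thesis using L Lfix by simp
  qed
  have c12: "(q > phi_minus p k \<longrightarrow> (\<lambda>t. (F p k ^^ t) q) \<longlonglongrightarrow> phi_plus p k)
       \<and> (q < phi_minus p k \<longrightarrow> (\<lambda>t. (F p k ^^ t) q) \<longlonglongrightarrow> 0)" if "p < p_star k"
  proof -
    have "(1-p) * HB m > 1" using that ps H by (auto simp: field_simps)
    then obtain \<phi>1 \<phi>2 where f: "0 < \<phi>1" "\<phi>1 < \<phi>2" "\<phi>2 \<le> 1" "fixpoints p k = {0, \<phi>1, \<phi>2}"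
      "\<forall>x. 0 < x \<and> x < \<phi>1 \<longrightarrow> F p k x < x" "\<forall>x. \<phi>1 < x \<and> x < \<phi>2 \<longrightarrow> F p k x > x"
      using fix_R3[OF k p] m_def by auto
    have pm: "phi_minus p k = \<phi>1"
    proof -
      have "fixpoints p k - {0} = {\<phi>1, \<phi>2}" using f by auto
      then show ?thesis unfolding phi_minus_def using f by (simp add: min_def)
    qed
    have pp: "phi_plus p k = \<phi>2" unfolding phi_plus_def using f by (simp add: max_def)
    have fx1: "F p k \<phi>1 = \<phi>1" "F p k \<phi>2 = \<phi>2" using f(4) unfolding fixpoints_def by auto
    have LL: "L = 0 \<or> L = \<phi>1 \<or> L = \<phi>2" using Lfix f(4) by auto
    have A: "(\<lambda>t. (F p k ^^ t) q) \<longlonglongrightarrow> \<phi>2" if qq: "q > \<phi>1"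
    proof -
      have "L = \<phi>2"
      proof (cases "q \<ge> \<phi>2")
        case True
        have "\<phi>2 \<le> (F p k ^^ t) q" for t
          by (rule iter_le_fix(2)[OF FP(2,3)]) (use f fx1 q True in auto)
        then have "\<phi>2 \<le> L" using LIMSEQ_le_const[OF L(1)] by blast
        then show ?thesis using LL f by auto
      next
        case False
        then have "F p k q > q" using f(6) qq by auto
        then have "q \<le> L" using L by simp
        then show ?thesis using LL f qq by auto
      qed
      then show ?thesis using L by simp
    qed
    have B: "(\<lambda>t. (F p k ^^ t) q) \<longlonglongrightarrow> 0" if qq: "q < \<phi>1"
    proof -
      have "(F p k ^^ t) q \<le> \<phi>1" for t
        by (rule iter_le_fix(1)[OF FP(2,3)]) (use f fx1 q qq in auto)
      then have "L \<le> \<phi>1" using LIMSEQ_le_const2[OF L(1)] by blast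
      have "F p k q \<le> q"
      proof (cases "q = 0")
        case True then show ?thesis using F_zero[OF k] by simp
      next
        case False then show ?thesis using f(5) q qq by (simp add: less_imp_le)
      qed
      then have "L \<le> q" using L by simp
      then have "L = 0" using LL f qq L(2) by auto
      then show ?thesis using L by simp
    qed
    show ?thesis using A B pm pp by simp
  qed
  show ?thesis using c3 c12 by blast
qed

lemma (in prob_space) count_binomial:
  fixes Z :: "'i \<Rightarrow> 'a \<Rightarrow> bool"
  assumes ind: "indep_vars (\<lambda>_. count_space UNIV) Z A" and fin: "finite A" and ne: "A \<noteq> {}"
    and pr: "\<And>i. i \<in> A \<Longrightarrow> prob {\<omega>\<in>space M. Z i \<omega>} = r" and r: "0 \<le> r" "r \<le> 1"
  shows "prob {\<omega>\<in>space M. card {i\<in>A. Z i \<omega>} \<in> T} = measure_pmf.prob (binomial_pmf (card A) r) T"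
proof -
  define D where "D = PiE_dflt A False (\<lambda>_. UNIV) \<inter> {f. card {x\<in>A. f x} \<in> T}"
  have finD: "finite D" unfolding D_def using fin by (intro finite_Int disjI1 finite_PiE_dflt) auto
  define E where "E = (\<lambda>f. \<Inter>i\<in>A. Z i -` {f i} \<inter> space M)"
  have rv: "random_variable (count_space UNIV) (Z i)" if "i \<in> A" for i
    using ind that unfolding indep_vars_def by auto
  have Eev: "E f \<in> events" for f
    unfolding E_def using fin ne rv by (intro sets.finite_INT) (auto intro: measurable_sets)
  have eq: "{\<omega>\<in>space M. card {i\<in>A. Z i \<omega>} \<in> T} = (\<Union>f\<in>D. E f)"
  proof (intro equalityI subsetI)
    fix \<omega> assume \<omega>: "\<omega> \<in> {\<omega>\<in>space M. card {i\<in>A. Z i \<omega>} \<in> T}"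
    define f where "f = (\<lambda>x. if x \<in> A then Z x \<omega> else False)"
    have "{x\<in>A. f x} = {i\<in>A. Z i \<omega>}" unfolding f_def by auto
    then have "f \<in> D" using \<omega> unfolding D_def PiE_dflt_def f_def by auto
    moreover have "\<omega> \<in> E f" using \<omega> unfolding E_def f_def by auto
    ultimately show "\<omega> \<in> (\<Union>f\<in>D. E f)" by blast
  next
    fix \<omega> assume "\<omega> \<in> (\<Union>f\<in>D. E f)"
    then obtain f where f: "f \<in> D" "\<omega> \<in> E f" by blast
    have "\<omega> \<in> space M" "\<forall>i\<in>A. Z i \<omega> = f i" using f(2) ne unfolding E_def by auto
    then have "{i\<in>A. Z i \<omega>} = {x\<in>A. f x}" "\<omega> \<in> space M" by auto
    then show "\<omega> \<in> {\<omega>\<in>space M. card {i\<in>A. Z i \<omega>} \<in> T}" using f(1) unfolding D_def by auto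
  qed
  have disj: "disjoint_family_on E D"
    unfolding disjoint_family_on_def
  proof (intro ballI impI)
    fix f g assume fg: "f \<in> D" "g \<in> D" "f \<noteq> g"
    then obtain x where x: "f x \<noteq> g x" by auto
    then have "x \<in> A" using fg unfolding D_def PiE_dflt_def by auto
    then show "E f \<inter> E g = {}" using x unfolding E_def by auto
  qed
  have pz: "prob (Z i -` {b} \<inter> space M) = pmf (bernoulli_pmf r) b" if i: "i \<in> A" for i b
  proof (cases b)
    case True
    have "Z i -` {b} \<inter> space M = {\<omega>\<in>space M. Z i \<omega>}" using True by auto
    then show ?thesis using pr[OF i] r True by simp
  next
    case False
    have "Z i -` {b} \<inter> space M = space M - {\<omega>\<in>space M. Z i \<omega>}" using False by auto
    moreover have "{\<omega>\<in>space M. Z i \<omega>} \<in> events"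
      using measurable_sets[OF rv[OF i], of "{True}"] by (simp add: vimage_def Int_def conj_commute)
    ultimately show ?thesis using pr[OF i] r False prob_compl by simp
  qed
  have pE: "prob (E f) = (\<Prod>i\<in>A. pmf (bernoulli_pmf r) (f i))" for f
  proof -
    have "prob (E f) = (\<Prod>i\<in>A. prob (Z i -` {f i} \<inter> space M))"
      unfolding E_def by (rule indep_varsD_finite[OF ind ne fin]) auto
    then show ?thesis using pz by simp
  qed
  have "prob {\<omega>\<in>space M. card {i\<in>A. Z i \<omega>} \<in> T} = (\<Sum>f\<in>D. prob (E f))"
    unfolding eq by (rule finite_measure_finite_Union[OF finD _ disj]) (use Eev in auto)
  also have "\<dots> = (\<Sum>f\<in>D. \<Prod>i\<in>A. pmf (bernoulli_pmf r) (f i))" using pE by simp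
  also have "\<dots> = measure_pmf.prob (binomial_pmf (card A) r) T"
  proof -
    let ?P = "Pi_pmf A False (\<lambda>_. bernoulli_pmf r)"
    have "binomial_pmf (card A) r = map_pmf (\<lambda>f. card {x\<in>A. f x}) ?P"
      by (rule binomial_pmf_altdef'[OF fin refl]) (use r in auto)
    then have "measure_pmf.prob (binomial_pmf (card A) r) T = measure_pmf.prob ?P ((\<lambda>f. card {x\<in>A. f x}) -` T)"
      by simp
    also have "\<dots> = measure_pmf.prob ?P D"
    proof (rule measure_prob_cong_0)
      fix f assume "f \<in> (\<lambda>f. card {x\<in>A. f x}) -` T - D"
      then have "\<exists>x. x \<notin> A \<and> f x \<noteq> False" unfolding D_def PiE_dflt_def by auto
      then show "pmf ?P f = 0" by (rule pmf_Pi_outside[OF fin])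
    next
      fix f assume "f \<in> D - (\<lambda>f. card {x\<in>A. f x}) -` T"
      then show "pmf ?P f = 0" unfolding D_def by auto
    qed
    also have "\<dots> = (\<Sum>f\<in>D. pmf ?P f)" by (rule measure_measure_pmf_finite[OF finD])
    also have "\<dots> = (\<Sum>f\<in>D. \<Prod>i\<in>A. pmf (bernoulli_pmf r) (f i))"
      by (rule sum.cong[OF refl], rule pmf_Pi'[OF fin]) (auto simp: D_def PiE_dflt_def)
    finally show ?thesis by simp
  qed
  finally show ?thesis .
qed

lemma (in product_prob_space) indep_coords:
  "prob_space.indep_vars (PiM I M) M (\<lambda>i \<omega>. \<omega> i) I"
proof -
  have "P.indep_sets (\<lambda>i. {(\<lambda>\<omega>. \<omega> i) -` A \<inter> space (PiM I M) | A. A \<in> sets (M i)}) I"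
  proof (rule P.indep_setsI)
    fix i assume "i \<in> I"
    then show "{(\<lambda>\<omega>. \<omega> i) -` A \<inter> space (PiM I M) | A. A \<in> sets (M i)} \<subseteq> P.events"
      by (auto intro: measurable_sets measurable_component_singleton)
  next
    fix A J assume J: "J \<noteq> {}" "J \<subseteq> I" "finite J"
      and A: "\<forall>j\<in>J. A j \<in> {(\<lambda>\<omega>. \<omega> j) -` A \<inter> space (PiM I M) | A. A \<in> sets (M j)}"
    have "\<forall>j\<in>J. \<exists>B. A j = (\<lambda>\<omega>. \<omega> j) -` B \<inter> space (PiM I M) \<and> B \<in> sets (M j)"
      using A by auto
    then obtain B where B: "\<forall>j\<in>J. A j = (\<lambda>\<omega>. \<omega> j) -` B j \<inter> space (PiM I M) \<and> B j \<in> sets (M j)"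
      by (metis bchoice)
    have "(\<Inter>j\<in>J. A j) = prod_emb I M J (Pi\<^sub>E J B)"
      using J B by (auto simp: prod_emb_def space_PiM PiE_iff)
    then have "P.prob (\<Inter>j\<in>J. A j) = (\<Prod>j\<in>J. measure (M j) (B j))"
      using measure_PiM_emb[OF J(2,3)] B by simp
    moreover have "P.prob (A j) = measure (M j) (B j)" if j: "j \<in> J" for j
    proof -
      have "A j = prod_emb I M {j} (Pi\<^sub>E {j} B)"
        using J B j by (auto simp: prod_emb_def space_PiM PiE_iff)
      then show ?thesis using measure_PiM_emb[of "{j}" B] J B j by auto
    qed
    ultimately show "P.prob (\<Inter>j\<in>J. A j) = (\<Prod>j\<in>J. P.prob (A j))" by simp
  qed
  then show ?thesis unfolding P.indep_vars_def2 by (auto intro: measurable_component_singleton)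
qed

definition emM :: "real \<Rightarrow> real \<Rightarrow> em_index \<Rightarrow> bool measure" where
  "emM p q = (\<lambda>i. case i of Inl _ \<Rightarrow> measure_pmf (bernoulli_pmf q) | Inr _ \<Rightarrow> measure_pmf (bernoulli_pmf p))"

lemma em_space_eq: "em_space p q = PiM UNIV (emM p q)"
  unfolding em_space_def emM_def ..

lemma emM_prob: "prob_space (emM p q i)"
  by (cases i) (auto simp: emM_def prob_space_measure_pmf)

lemma space_emM[simp]: "space (emM p q i) = UNIV"
  by (cases i) (auto simp: emM_def)

lemma measurable_emM: "measurable N (emM p q i) = measurable N (count_space UNIV)"
  by (cases i) (auto simp: emM_def)

lemma sets_emM[simp]: "sets (emM p q i) = UNIV"
  by (cases i) (auto simp: emM_def)

fun vtx :: "em_index \<Rightarrow> nat list" where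
  "vtx (Inl u) = u"
| "vtx (Inr (u, _, _)) = u"

definition Desc :: "nat list \<Rightarrow> em_index set" where
  "Desc w = {j. \<exists>r. vtx j = w @ r}"

lemma Desc_child: "Desc (w @ [i]) \<subseteq> Desc w"
  unfolding Desc_def by auto

lemma em_local:
  "(\<And>j. j \<in> Desc w \<Longrightarrow> \<omega> j = \<omega>' j) \<Longrightarrow> em_state k \<omega> w t = em_state k \<omega>' w t"
proof (induction t arbitrary: w)
  case 0
  have "Inl w \<in> Desc w" unfolding Desc_def by auto
  then show ?case using 0 by simp
next
  case (Suc t)
  have "Inr (w, i, t) \<in> Desc w" for i unfolding Desc_def by auto
  moreover have "em_state k \<omega> (w @ [i]) t = em_state k \<omega>' (w @ [i]) t" for i
    using Suc.IH[of "w @ [i]"] Suc.prems Desc_child by blast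
  ultimately have "{i. i < k \<and> \<not> \<omega> (Inr (w, i, t)) \<and> em_state k \<omega> (w @ [i]) t}
      = {i. i < k \<and> \<not> \<omega>' (Inr (w, i, t)) \<and> em_state k \<omega>' (w @ [i]) t}"
    using Suc.prems by auto
  then show ?case by simp
qed

lemma card_reform:
  "(k + 1 \<le> 2 * card {i. i < k \<and> P i}) \<longleftrightarrow> (\<exists>S\<in>Pow {..<k}. k + 1 \<le> 2 * card S \<and> (\<forall>i\<in>S. P i))"
proof
  assume "k + 1 \<le> 2 * card {i. i < k \<and> P i}"
  then show "\<exists>S\<in>Pow {..<k}. k + 1 \<le> 2 * card S \<and> (\<forall>i\<in>S. P i)"
    by (intro bexI[of _ "{i. i < k \<and> P i}"]) auto
next
  assume "\<exists>S\<in>Pow {..<k}. k + 1 \<le> 2 * card S \<and> (\<forall>i\<in>S. P i)"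
  then obtain S where S: "S \<subseteq> {..<k}" "k + 1 \<le> 2 * card S" "\<forall>i\<in>S. P i" by auto
  have "card S \<le> card {i. i < k \<and> P i}" by (rule card_mono) (use S in auto)
  then show "k + 1 \<le> 2 * card {i. i < k \<and> P i}" using S by simp
qed

lemma comp_pred: "j \<in> K \<Longrightarrow> Measurable.pred (PiM K (emM p q)) (\<lambda>x. x j)"
  using measurable_component_singleton[of j K "emM p q"] measurable_emM by metis

lemma em_meas:
  "Desc w \<subseteq> K \<Longrightarrow> Measurable.pred (PiM K (emM p q)) (\<lambda>x. em_state k x w t)"
proof (induction t arbitrary: w)
  case 0
  have "Inl w \<in> Desc w" unfolding Desc_def by auto
  then have "Inl w \<in> K" using 0 by blast
  then show ?case using comp_pred by simp
next
  case (Suc t)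
  have eq: "(\<lambda>x. em_state k x w (Suc t)) = (\<lambda>x. \<exists>S\<in>Pow {..<k}. k + 1 \<le> 2 * card S \<and>
      (\<forall>i\<in>S. \<not> x (Inr (w, i, t)) \<and> em_state k x (w @ [i]) t))"
    by (simp only: em_state.simps card_reform)
  have inr: "Inr (w, i, t) \<in> K" for i using Suc.prems unfolding Desc_def by auto
  have ch: "Desc (w @ [i]) \<subseteq> K" for i using Suc.prems Desc_child by blast
  show ?case unfolding eq
  proof (intro pred_intros_finite(4) pred_intros_logic(3) pred_intros_finite(3) pred_intros_logic(2))
    show "finite (Pow {..<k})" by simp
    fix S assume "S \<in> Pow {..<k}"
    then show "finite S" by (auto intro: finite_subset)
    show "Measurable.pred (PiM K (emM p q)) (\<lambda>x. k + 1 \<le> 2 * card S)" by simp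
    fix i
    show "Measurable.pred (PiM K (emM p q)) (\<lambda>x. x (Inr (w, i, t)))" by (rule comp_pred[OF inr])
    show "Measurable.pred (PiM K (emM p q)) (\<lambda>x. em_state k x (w @ [i]) t)" by (rule Suc.IH[OF ch])
  qed
qed

lemma (in product_prob_space) measure_coord:
  assumes "i \<in> I" "A \<in> sets (M i)"
  shows "measure (PiM I M) {x\<in>space (PiM I M). x i \<in> A} = measure (M i) A"
  unfolding measure_def using emeasure_PiM_Collect_single[OF assms] by simp

lemma F_range: "0 \<le> F p k x \<and> F p k x \<le> 1"
  unfolding F_def by simp

lemma iter_range: "0 \<le> q \<Longrightarrow> q \<le> 1 \<Longrightarrow> 0 \<le> (F p k ^^ t) q \<and> (F p k ^^ t) q \<le> 1"
  by (cases t) (auto simp: F_range)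

lemma prob_state:
  assumes p: "0 \<le> p" "p \<le> 1" and q: "0 \<le> q" "q \<le> 1" and k: "k \<ge> 1"
  shows "measure (em_space p q) {\<omega>\<in>space (em_space p q). em_state k \<omega> w t} = (F p k ^^ t) q"
proof -
  interpret PS: product_prob_space "emM p q" UNIV
    by (rule product_prob_spaceI) (rule emM_prob)
  let ?M = "PiM UNIV (emM p q)"
  have ic: "PS.indep_vars (emM p q) (\<lambda>i \<omega>. \<omega> i) UNIV" by (rule PS.indep_coords)
  have "measure ?M {\<omega>\<in>space ?M. em_state k \<omega> w t} = (F p k ^^ t) q"
  proof (induction t arbitrary: w)
    case 0
    have "measure ?M {\<omega>\<in>space ?M. \<omega> (Inl w) \<in> {True}} = measure (emM p q (Inl w)) {True}"
      by (rule PS.measure_coord) auto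
    then show ?case using q by (simp add: emM_def measure_pmf_single)
  next
    case (Suc t)
    define r where "r = (F p k ^^ t) q"
    have r: "0 \<le> r" "r \<le> 1" using iter_range[OF q] unfolding r_def by auto
    define Z where "Z = (\<lambda>i \<omega>. \<not> \<omega> (Inr (w, i, t)) \<and> em_state k \<omega> (w @ [i]) t)"
    define K where "K = (\<lambda>i. insert (Inr (w, i, t)) (Desc (w @ [i])))"
    have inrD: "Inr (w, i, t) \<notin> Desc (w @ [i'])" for i i' unfolding Desc_def by auto
    have disjD: "Desc (w @ [i]) \<inter> Desc (w @ [i']) = {}" if "i \<noteq> i'" for i i'
      using that unfolding Desc_def by auto
    have disjK: "disjoint_family_on K {..<k}"
      unfolding disjoint_family_on_def K_def using inrD disjD by auto
    have ir: "PS.indep_vars (\<lambda>i. PiM (K i) (emM p q)) (\<lambda>i \<omega>. restrict (\<lambda>j. \<omega> j) (K i)) {..<k}"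
      by (rule PS.indep_vars_restrict[OF ic _ disjK]) auto
    define Y where "Y = (\<lambda>i x. \<not> x (Inr (w, i, t)) \<and> em_state k x (w @ [i]) t)"
    have Ym: "Y i \<in> measurable (PiM (K i) (emM p q)) (count_space UNIV)" for i
      unfolding Y_def
    proof (intro pred_intros_logic(3) pred_intros_logic(2))
      show "Measurable.pred (PiM (K i) (emM p q)) (\<lambda>x. x (Inr (w, i, t)))"
        by (rule comp_pred) (simp add: K_def)
      show "Measurable.pred (PiM (K i) (emM p q)) (\<lambda>x. em_state k x (w @ [i]) t)"
        by (rule em_meas) (auto simp: K_def)
    qed
    have iz: "PS.indep_vars (\<lambda>_. count_space UNIV) (\<lambda>i \<omega>. Y i (restrict (\<lambda>j. \<omega> j) (K i))) {..<k}"
      by (rule PS.indep_vars_compose2[OF ir Ym])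
    have YZ: "(\<lambda>i \<omega>. Y i (restrict (\<lambda>j. \<omega> j) (K i))) = Z"
    proof (intro ext)
      fix i \<omega>
      have "em_state k (restrict \<omega> (K i)) (w @ [i]) t = em_state k \<omega> (w @ [i]) t"
        by (rule em_local) (auto simp: K_def)
      then show "Y i (restrict (\<lambda>j. \<omega> j) (K i)) = Z i \<omega>" unfolding Y_def Z_def by (simp add: K_def)
    qed
    have indZ: "PS.indep_vars (\<lambda>_. count_space UNIV) Z {..<k}" using iz YZ by simp
    have prZ: "PS.prob {\<omega>\<in>space ?M. Z i \<omega>} = (1 - p) * r" if i: "i \<in> {..<k}" for i
    proof -
      let ?A = "{Inr (w, i, t)}" and ?B = "Desc (w @ [i])"
      have iv: "PS.indep_var (PiM ?A (emM p q)) (\<lambda>\<omega>. restrict (\<lambda>j. \<omega> j) ?A)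
                             (PiM ?B (emM p q)) (\<lambda>\<omega>. restrict (\<lambda>j. \<omega> j) ?B)"
        by (rule PS.indep_var_restrict[OF ic]) (use inrD in auto)
      define Xa where "Xa = {x\<in>space (PiM ?A (emM p q)). \<not> x (Inr (w, i, t))}"
      define Xb where "Xb = {x\<in>space (PiM ?B (emM p q)). em_state k x (w @ [i]) t}"
      have Xa: "Xa \<in> sets (PiM ?A (emM p q))" unfolding Xa_def
        by (rule predE, rule pred_intros_logic(2), rule comp_pred) simp
      have Xb: "Xb \<in> sets (PiM ?B (emM p q))" unfolding Xb_def
        by (rule predE, rule em_meas) simp
      have loc: "em_state k (restrict \<omega> ?B) (w @ [i]) t = em_state k \<omega> (w @ [i]) t" for \<omega>
        by (rule em_local) auto
      have e1: "(\<lambda>\<omega>. (restrict (\<lambda>j. \<omega> j) ?A, restrict (\<lambda>j. \<omega> j) ?B)) -` (Xa \<times> Xb) \<inter> space ?M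
          = {\<omega>\<in>space ?M. Z i \<omega>}"
        unfolding Xa_def Xb_def Z_def using loc by (auto simp: space_PiM)
      have e2: "(\<lambda>\<omega>. restrict (\<lambda>j. \<omega> j) ?A) -` Xa \<inter> space ?M = {\<omega>\<in>space ?M. \<omega> (Inr (w, i, t)) \<in> {False}}"
        unfolding Xa_def by (auto simp: space_PiM)
      have e3: "(\<lambda>\<omega>. restrict (\<lambda>j. \<omega> j) ?B) -` Xb \<inter> space ?M = {\<omega>\<in>space ?M. em_state k \<omega> (w @ [i]) t}"
        unfolding Xb_def using loc by (auto simp: space_PiM)
      have "PS.prob {\<omega>\<in>space ?M. Z i \<omega>} =
          PS.prob {\<omega>\<in>space ?M. \<omega> (Inr (w, i, t)) \<in> {False}} * PS.prob {\<omega>\<in>space ?M. em_state k \<omega> (w @ [i]) t}"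
        using PS.indep_varD[OF iv Xa Xb] unfolding e1 e2 e3 .
      also have "PS.prob {\<omega>\<in>space ?M. \<omega> (Inr (w, i, t)) \<in> {False}} = measure (emM p q (Inr (w, i, t))) {False}"
        by (rule PS.measure_coord) auto
      also have "\<dots> = 1 - p" using p by (simp add: emM_def measure_pmf_single)
      also have "PS.prob {\<omega>\<in>space ?M. em_state k \<omega> (w @ [i]) t} = r" using Suc.IH[of "w @ [i]"] r_def by simp
      finally show ?thesis .
    qed
    have "{\<omega>\<in>space ?M. em_state k \<omega> w (Suc t)} = {\<omega>\<in>space ?M. card {i\<in>{..<k}. Z i \<omega>} \<in> {j. k + 1 \<le> 2 * j}}"
      unfolding Z_def by (auto simp: conj_commute)
    also have "PS.prob \<dots> = measure_pmf.prob (binomial_pmf (card {..<k}) ((1 - p) * r)) {j. k + 1 \<le> 2 * j}"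
      by (rule PS.count_binomial[OF indZ]) (use k prZ r p in \<open>auto simp: mult_le_one lessThan_empty_iff\<close>)
    also have "\<dots> = F p k r" unfolding F_def by simp
    finally show ?case unfolding r_def by simp
  qed
  then show ?thesis unfolding em_space_eq .
qed

theorem theorem4p3:
  fixes k :: nat and p q :: real
  assumes "odd k" and "k \<ge> 3"
    and "0 \<le> p" and "p \<le> 1" and "0 \<le> q" and "q \<le> 1"
  shows "(p < p_star k \<and> q > phi_minus p k \<longrightarrow>
            (\<lambda>t. prob_root_R k p q t) \<longlonglongrightarrow> phi_plus p k)
       \<and> (p < p_star k \<and> q < phi_minus p k \<longrightarrow>
            (\<lambda>t. prob_root_R k p q t) \<longlonglongrightarrow> 0)
       \<and> (p > p_star k \<longrightarrow> (\<lambda>t. prob_root_R k p q t) \<longlonglongrightarrow> 0)"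
proof -
  have eq: "(\<lambda>t. prob_root_R k p q t) = (\<lambda>t. (F p k ^^ t) q)"
  proof
    fix t
    show "prob_root_R k p q t = (F p k ^^ t) q"
      unfolding prob_root_R_def by (rule prob_state) (use assms in auto)
  qed
  show ?thesis unfolding eq by (rule main_analysis) (use assms in auto)
qed

end
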